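(* Let $k\ge1$, $\lambda_0>0$, and let $Q(x,dy)$ be a spatially homogeneous Markov kernel on $\mathbf{R}^k$ (i.e. $Q(x,dy)=Q(x-z,dy-z)$ and $Q(z,\mathbf{R}^k)=1$ for all $x,z$) with $Q(0,\{0\})=0$ and symmetric with respect to Lebesgue measure, $Q(x,dy)dx=Q(y,dx)dy$. Consider the compound Poisson process $X_t=x+\sum_{n=1}^{N_t}\xi_n$, where $N$ is a Poisson process with rate $\lambda_0$ and $(\xi_n)$ are i.i.d. with law $Q(0,\cdot)$ independent of $N$; it is symmetric with respect to $m(dx)=\lambda_0^{-1}dx$, and its associated Dirichlet form on $L^2(\mathbf{R}^k,m)$ is $\mathcal{F}=L^2(\mathbf{R}^k,m)$, $\mathcal{E}(u,v)=\frac12\int_{\mathbf{R}^k\times\mathbf{R}^k}(u(x)-u(y))(v(x)-v(y))Q(x,dy)\lambda_0\,m(dx)$, a regular Dirichlet form. Then $(\mathcal{E},\mathcal{F})$ has no proper regular Dirichlet subspace: every regular Dirichlet subspace of $(\mathcal{E},\mathcal{F})$ equals $(\mathcal{E},\mathcal{F})$.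
   Context: A regular Dirichlet subspace of a regular Dirichlet form $(\mathcal{E},\mathcal{F})$ on $L^2(E,m)$ is a regular Dirichlet form $(\mathcal{E}',\mathcal{F}')$ on $L^2(E,m)$ with $\mathcal{F}'\subset\mathcal{F}$ and $\mathcal{E}'(u,v)=\mathcal{E}(u,v)$ for all $u,v\in\mathcal{F}'$; it is proper if it differs from $(\mathcal{E},\mathcal{F})$. *)

theory Defs
  imports "HOL-Analysis.Analysis" "HOL-Probability.Probability"
begin

text \<open>Functions are used as representatives of L^2 classes; the domain of a form is
required to be saturated under a.e. equality and the form to respect a.e. equality.\<close>

definition L2 :: "'a measure \<Rightarrow> ('a \<Rightarrow> real) set" where
  "L2 M = {f. f \<in> borel_measurable M \<and> integrable M (\<lambda>x. (f x)\<^sup>2)}"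

definition E1 :: "'a measure \<Rightarrow> (('a \<Rightarrow> real) \<Rightarrow> ('a \<Rightarrow> real) \<Rightarrow> real)
    \<Rightarrow> ('a \<Rightarrow> real) \<Rightarrow> ('a \<Rightarrow> real) \<Rightarrow> real" where
  "E1 M E u v = E u v + (\<integral>x. u x * v x \<partial>M)"

definition dirichlet_form :: "'a measure \<Rightarrow> ('a \<Rightarrow> real) set
    \<Rightarrow> (('a \<Rightarrow> real) \<Rightarrow> ('a \<Rightarrow> real) \<Rightarrow> real) \<Rightarrow> bool" where
  "dirichlet_form M F E \<longleftrightarrow>
     F \<subseteq> L2 M
   \<and> (\<forall>u\<in>F. \<forall>g\<in>L2 M. (AE x in M. u x = g x) \<longrightarrow> g \<in> F)
   \<and> (\<forall>u\<in>F. \<forall>u'\<in>F. \<forall>v\<in>F. \<forall>v'\<in>F.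
        (AE x in M. u x = u' x) \<longrightarrow> (AE x in M. v x = v' x) \<longrightarrow> E u v = E u' v')
   \<and> (\<lambda>_. 0) \<in> F
   \<and> (\<forall>u\<in>F. \<forall>v\<in>F. (\<lambda>x. u x + v x) \<in> F)
   \<and> (\<forall>u\<in>F. \<forall>c::real. (\<lambda>x. c * u x) \<in> F)
   \<and> (\<forall>u\<in>F. \<forall>v\<in>F. \<forall>w\<in>F. E (\<lambda>x. u x + v x) w = E u w + E v w)
   \<and> (\<forall>u\<in>F. \<forall>w\<in>F. \<forall>c::real. E (\<lambda>x. c * u x) w = c * E u w)
   \<and> (\<forall>u\<in>F. \<forall>v\<in>F. E u v = E v u)
   \<and> (\<forall>u\<in>F. 0 \<le> E u u)
   \<and> (\<forall>f\<in>L2 M. \<forall>e>0. \<exists>u\<in>F. (\<integral>x. (f x - u x)\<^sup>2 \<partial>M) < e)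
   \<and> (\<forall>u. (\<forall>n. u n \<in> F) \<longrightarrow>
        (\<forall>e>0. \<exists>N. \<forall>n\<ge>N. \<forall>m\<ge>N.
            E1 M E (\<lambda>x. u n x - u m x) (\<lambda>x. u n x - u m x) < e) \<longrightarrow>
        (\<exists>w\<in>F. (\<lambda>n. E1 M E (\<lambda>x. u n x - w x) (\<lambda>x. u n x - w x)) \<longlonglongrightarrow> 0))
   \<and> (\<forall>u\<in>F. (\<lambda>x. min 1 (max 0 (u x))) \<in> F
        \<and> E (\<lambda>x. min 1 (max 0 (u x))) (\<lambda>x. min 1 (max 0 (u x))) \<le> E u u)"

definition Cc :: "('a::topological_space \<Rightarrow> real) set" where
  "Cc = {f. continuous_on UNIV f \<and> compact (closure {x. f x \<noteq> 0})}"

definition regular_dirichlet_form :: "'a::topological_space measure \<Rightarrow> ('a \<Rightarrow> real) set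
    \<Rightarrow> (('a \<Rightarrow> real) \<Rightarrow> ('a \<Rightarrow> real) \<Rightarrow> real) \<Rightarrow> bool" where
  "regular_dirichlet_form M F E \<longleftrightarrow>
     dirichlet_form M F E
   \<and> (\<forall>u\<in>F. \<forall>e>0. \<exists>g\<in>F \<inter> Cc. E1 M E (\<lambda>x. u x - g x) (\<lambda>x. u x - g x) < e)
   \<and> (\<forall>f\<in>Cc. \<forall>e>0. \<exists>g\<in>F \<inter> Cc. \<forall>x. \<bar>f x - g x\<bar> < e)"

definition regular_dirichlet_subspace :: "'a::topological_space measure
    \<Rightarrow> ('a \<Rightarrow> real) set \<Rightarrow> (('a \<Rightarrow> real) \<Rightarrow> ('a \<Rightarrow> real) \<Rightarrow> real)
    \<Rightarrow> ('a \<Rightarrow> real) set \<Rightarrow> (('a \<Rightarrow> real) \<Rightarrow> ('a \<Rightarrow> real) \<Rightarrow> real) \<Rightarrow> bool" where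
  "regular_dirichlet_subspace M F' E' F E \<longleftrightarrow>
     regular_dirichlet_form M F' E' \<and> F' \<subseteq> F \<and> (\<forall>u\<in>F'. \<forall>v\<in>F'. E' u v = E u v)"

end

theory Submission
  imports Defs "HOL-Probability.Probability"
begin

lemma bind_id:
  fixes Q :: "'a::euclidean_space \<Rightarrow> 'a measure"
  assumes Q_kernel: "Q \<in> borel \<rightarrow>\<^sub>M prob_algebra borel"
    and Q_symm: "\<And>A B. A \<in> sets borel \<Longrightarrow> B \<in> sets borel \<Longrightarrow>
        (\<integral>\<^sup>+ x. indicator A x * emeasure (Q x) B \<partial>lborel)
          = (\<integral>\<^sup>+ y. indicator B y * emeasure (Q y) A \<partial>lborel)"
    and Q_prob: "\<And>z. emeasure (Q z) UNIV = 1"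
    and g: "g \<in> borel_measurable borel"
  shows "(\<integral>\<^sup>+ x. \<integral>\<^sup>+ y. g y \<partial>Q x \<partial>lborel) = (\<integral>\<^sup>+ y. g y \<partial>lborel)"
proof -
  have QM: "Q \<in> lborel \<rightarrow>\<^sub>M subprob_algebra borel"
    using measurable_prob_algebraD[OF Q_kernel] by simp
  have sQ: "sets (Q x) = sets borel" for x
    using measurable_space[OF Q_kernel, of x] by (simp add: space_prob_algebra)
  have sb: "sets (lborel \<bind> Q) = sets borel"
    by (rule sets_bind) (auto simp: sQ)
  have eq: "lborel \<bind> Q = lborel"
  proof (rule measure_eqI)
    show "sets (lborel \<bind> Q) = sets lborel" using sb by simp
    fix B assume "B \<in> sets (lborel \<bind> Q)"
    then have B: "B \<in> sets borel" using sb by simp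
    have "emeasure (lborel \<bind> Q) B = (\<integral>\<^sup>+ x. emeasure (Q x) B \<partial>lborel)"
      by (rule emeasure_bind[OF _ QM B]) simp
    also have "\<dots> = (\<integral>\<^sup>+ x. indicator UNIV x * emeasure (Q x) B \<partial>lborel)" by simp
    also have "\<dots> = (\<integral>\<^sup>+ y. indicator B y * emeasure (Q y) UNIV \<partial>lborel)"
      using B by (intro Q_symm) auto
    also have "\<dots> = emeasure lborel B" using B Q_prob by simp
    finally show "emeasure (lborel \<bind> Q) B = emeasure lborel B" .
  qed
  have "(\<integral>\<^sup>+ y. g y \<partial>(lborel \<bind> Q)) = (\<integral>\<^sup>+ x. \<integral>\<^sup>+ y. g y \<partial>Q x \<partial>lborel)"
    by (rule nn_integral_bind[OF g QM])
  then show ?thesis using eq by simp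
qed

lemma E_bound:
  fixes Q :: "'a::euclidean_space \<Rightarrow> 'a measure"
  assumes Q_kernel: "Q \<in> borel \<rightarrow>\<^sub>M prob_algebra borel"
    and bind: "\<And>g. g \<in> borel_measurable borel \<Longrightarrow>
       (\<integral>\<^sup>+ x. \<integral>\<^sup>+ y. g y \<partial>Q x \<partial>lborel) = (\<integral>\<^sup>+ y. g y \<partial>lborel)"
    and Q_prob: "\<And>z. emeasure (Q z) UNIV = 1"
    and lam: "lam0 > 0"
    and m_def: "m = density lborel (\<lambda>_. ennreal (1 / lam0))"
    and wm: "w \<in> borel_measurable borel"
    and wi: "integrable m (\<lambda>x. (w x)\<^sup>2)"
  shows "(1/2) * (\<integral>x. (\<integral>y. (w x - w y) * (w x - w y) \<partial>(Q x)) * lam0 \<partial>m)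
     \<le> 2 * lam0 * (\<integral>x. (w x)\<^sup>2 \<partial>m)"
proof -
  define I where "I = (\<integral>x. (w x)\<^sup>2 \<partial>m)"
  define K where "K = (\<integral>\<^sup>+ x. ennreal (2 * (w x)\<^sup>2) \<partial>lborel)"
  define g where "g x = (\<integral>y. (w x - w y) * (w x - w y) \<partial>(Q x))" for x
  have I0: "0 \<le> I" unfolding I_def by (intro integral_nonneg_AE) auto
  have sQ: "sets (Q x) = sets borel" for x
    using measurable_space[OF Q_kernel, of x] by (simp add: space_prob_algebra)
  have spQ: "space (Q x) = UNIV" for x
    using sets_eq_imp_space_eq[OF sQ[of x]] by simp
  have wQ: "w \<in> borel_measurable (Q x)" for x
    using wm by (simp add: measurable_cong_sets[OF sQ refl])
  have "ennreal (2*I) = (\<integral>\<^sup>+ x. ennreal (2 * (w x)\<^sup>2) \<partial>m)"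
    unfolding I_def using wi
    by (subst nn_integral_eq_integral) auto
  also have "\<dots> = (\<integral>\<^sup>+ x. ennreal (1/lam0) * ennreal (2 * (w x)\<^sup>2) \<partial>lborel)"
    unfolding m_def using wm by (subst nn_integral_density) auto
  also have "\<dots> = ennreal (1/lam0) * K"
    unfolding K_def using wm by (subst nn_integral_cmult) auto
  finally have K1: "ennreal (2*I) = ennreal (1/lam0) * K" .
  have K2: "K = ennreal (2*lam0*I)"
  proof -
    have "ennreal lam0 * ennreal (2*I) = (ennreal lam0 * ennreal (1/lam0)) * K"
      using K1 by (simp add: mult.assoc)
    also have "ennreal lam0 * ennreal (1/lam0) = 1"
      using lam by (subst ennreal_mult''[symmetric]) auto
    finally show ?thesis using lam I0 by (simp add: ennreal_mult'' mult_ac)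
  qed
  have pw: "ennreal (g x * lam0) \<le> ennreal lam0 * (ennreal (2 * (w x)\<^sup>2)
            + (\<integral>\<^sup>+ y. ennreal (2 * (w y)\<^sup>2) \<partial>Q x))" for x
  proof -
    have g0: "0 \<le> g x" unfolding g_def by (intro integral_nonneg_AE) auto
    have "ennreal (g x) \<le> (\<integral>\<^sup>+ y. ennreal ((w x - w y) * (w x - w y)) \<partial>Q x)"
    proof (cases "integrable (Q x) (\<lambda>y. (w x - w y) * (w x - w y))")
      case True
      then show ?thesis unfolding g_def by (subst nn_integral_eq_integral) auto
    next
      case False
      then show ?thesis unfolding g_def by (simp add: not_integrable_integral_eq)
    qed
    also have "\<dots> \<le> (\<integral>\<^sup>+ y. ennreal (2 * (w x)\<^sup>2) + ennreal (2 * (w y)\<^sup>2) \<partial>Q x)"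
    proof (intro nn_integral_mono)
      fix y
      have sq: "(w x - w y) * (w x - w y) \<le> 2 * (w x)\<^sup>2 + 2 * (w y)\<^sup>2"
        using zero_le_square[of "w x + w y"] by (simp add: power2_eq_square algebra_simps)
      then show "ennreal ((w x - w y) * (w x - w y)) \<le> ennreal (2 * (w x)\<^sup>2) + ennreal (2 * (w y)\<^sup>2)"
      proof -
        have "ennreal ((w x - w y) * (w x - w y)) \<le> ennreal (2 * (w x)\<^sup>2 + 2 * (w y)\<^sup>2)"
          using sq by (rule ennreal_leI)
        then show ?thesis by (subst (asm) ennreal_plus) auto
      qed
    qed
    also have "\<dots> = ennreal (2 * (w x)\<^sup>2) + (\<integral>\<^sup>+ y. ennreal (2 * (w y)\<^sup>2) \<partial>Q x)"
      using wQ[of x] by (subst nn_integral_add) (auto simp: spQ Q_prob)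
    finally have "ennreal (g x) \<le> ennreal (2 * (w x)\<^sup>2) + (\<integral>\<^sup>+ y. ennreal (2 * (w y)\<^sup>2) \<partial>Q x)" .
    then show ?thesis using g0 lam
      by (subst ennreal_mult'') (auto simp: mult.commute intro: mult_left_mono)
  qed
  have meas2: "(\<lambda>x. \<integral>\<^sup>+ y. ennreal (2 * (w y)\<^sup>2) \<partial>Q x) \<in> borel_measurable borel"
  proof -
    have "(\<lambda>M. \<integral>\<^sup>+ y. ennreal (2 * (w y)\<^sup>2) \<partial>M) \<in> borel_measurable (subprob_algebra borel)"
      using wm by (intro nn_integral_measurable_subprob_algebra) auto
    from measurable_comp[OF measurable_prob_algebraD[OF Q_kernel] this] show ?thesis
      by (simp add: o_def)
  qed
  have "(\<integral>\<^sup>+ x. ennreal (g x * lam0) \<partial>m) \<le> (\<integral>\<^sup>+ x. ennreal lam0 * (ennreal (2 * (w x)\<^sup>2)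
            + (\<integral>\<^sup>+ y. ennreal (2 * (w y)\<^sup>2) \<partial>Q x)) \<partial>m)"
    by (intro nn_integral_mono pw)
  also have "\<dots> = (\<integral>\<^sup>+ x. ennreal (1/lam0) * (ennreal lam0 * (ennreal (2 * (w x)\<^sup>2)
            + (\<integral>\<^sup>+ y. ennreal (2 * (w y)\<^sup>2) \<partial>Q x))) \<partial>lborel)"
    unfolding m_def using wm meas2 by (subst nn_integral_density) auto
  also have "\<dots> = (\<integral>\<^sup>+ x. (ennreal (2 * (w x)\<^sup>2)
            + (\<integral>\<^sup>+ y. ennreal (2 * (w y)\<^sup>2) \<partial>Q x)) \<partial>lborel)"
  proof -
    have "ennreal (1/lam0) * ennreal lam0 = 1"
      using lam by (subst ennreal_mult''[symmetric]) auto
    then show ?thesis by (simp add: mult.assoc[symmetric])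
  qed
  also have "\<dots> = K + K"
    unfolding K_def using wm meas2
    by (subst nn_integral_add) (auto simp: bind)
  also have "\<dots> = ennreal (4*lam0*I)"
    using K2 lam I0 by (simp add: ennreal_plus[symmetric] del: ennreal_plus)
  finally have "(\<integral>x. g x * lam0 \<partial>m) \<le> 4*lam0*I"
    using lam I0 by (intro integral_real_bounded) auto
  then show ?thesis unfolding g_def I_def by simp
qed

lemma L2_diff:
  assumes "a \<in> L2 M" "b \<in> L2 M"
  shows "(\<lambda>x. a x - b x) \<in> L2 M"
proof -
  have am: "a \<in> borel_measurable M" and bm: "b \<in> borel_measurable M"
    and ai: "integrable M (\<lambda>x. (a x)\<^sup>2)" and bi: "integrable M (\<lambda>x. (b x)\<^sup>2)"
    using assms by (auto simp: L2_def)
  have "integrable M (\<lambda>x. (a x - b x)\<^sup>2)"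
  proof (rule Bochner_Integration.integrable_bound[of _ "\<lambda>x. 2 * (a x)\<^sup>2 + 2 * (b x)\<^sup>2"])
    show "integrable M (\<lambda>x. 2 * (a x)\<^sup>2 + 2 * (b x)\<^sup>2)" using ai bi by auto
    show "(\<lambda>x. (a x - b x)\<^sup>2) \<in> borel_measurable M" using am bm by auto
    show "AE x in M. norm ((a x - b x)\<^sup>2) \<le> norm (2 * (a x)\<^sup>2 + 2 * (b x)\<^sup>2)"
    proof (intro AE_I2)
      fix x
      have "(a x - b x)\<^sup>2 \<le> 2 * (a x)\<^sup>2 + 2 * (b x)\<^sup>2"
        using zero_le_square[of "a x + b x"] by (simp add: power2_eq_square algebra_simps)
      then show "norm ((a x - b x)\<^sup>2) \<le> norm (2 * (a x)\<^sup>2 + 2 * (b x)\<^sup>2)" by simp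
    qed
  qed
  then show ?thesis using am bm by (auto simp: L2_def)
qed

lemma L2_sym: fixes a b :: "'a \<Rightarrow> real" shows "(\<integral>x. (a x - b x)\<^sup>2 \<partial>M) = (\<integral>x. (b x - a x)\<^sup>2 \<partial>M)"
proof -
  have "(\<lambda>x. (a x - b x)\<^sup>2) = (\<lambda>x. (b x - a x)\<^sup>2)"
    by (rule ext) (simp add: power2_eq_square algebra_simps)
  then show ?thesis by simp
qed

lemma sq_tri:
  assumes "a \<in> L2 M" "b \<in> L2 M" "c \<in> L2 M"
  shows "(\<integral>x. (a x - b x)\<^sup>2 \<partial>M) \<le> 2 * (\<integral>x. (a x - c x)\<^sup>2 \<partial>M) + 2 * (\<integral>x. (c x - b x)\<^sup>2 \<partial>M)"
proof -
  have i1: "integrable M (\<lambda>x. (a x - c x)\<^sup>2)" and i2: "integrable M (\<lambda>x. (c x - b x)\<^sup>2)"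
    and i3: "integrable M (\<lambda>x. (a x - b x)\<^sup>2)"
    using L2_diff[OF assms(1,3)] L2_diff[OF assms(3,2)] L2_diff[OF assms(1,2)] by (auto simp: L2_def)
  have "(\<integral>x. (a x - b x)\<^sup>2 \<partial>M) \<le> (\<integral>x. 2 * (a x - c x)\<^sup>2 + 2 * (c x - b x)\<^sup>2 \<partial>M)"
  proof (rule integral_mono)
    show "integrable M (\<lambda>x. 2 * (a x - c x)\<^sup>2 + 2 * (c x - b x)\<^sup>2)" using i1 i2 by auto
    fix x
    show "(a x - b x)\<^sup>2 \<le> 2 * (a x - c x)\<^sup>2 + 2 * (c x - b x)\<^sup>2"
      using zero_le_square[of "(a x - c x) - (c x - b x)"] by (simp add: power2_eq_square algebra_simps)
  qed (use i3 in auto)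
  also have "\<dots> = 2 * (\<integral>x. (a x - c x)\<^sup>2 \<partial>M) + 2 * (\<integral>x. (c x - b x)\<^sup>2 \<partial>M)"
    using i1 i2 by simp
  finally show ?thesis .
qed

theorem corollary4p2:
  fixes lam0 :: real
    and Q :: "'a::euclidean_space \<Rightarrow> 'a measure"
    and m :: "'a measure"
    and F :: "('a \<Rightarrow> real) set"
    and E :: "('a \<Rightarrow> real) \<Rightarrow> ('a \<Rightarrow> real) \<Rightarrow> real"
  assumes lam_pos: "lam0 > 0"
    and Q_kernel: "Q \<in> borel \<rightarrow>\<^sub>M prob_algebra borel"
    and Q_homog: "\<And>x z A. A \<in> sets borel \<Longrightarrow>
        emeasure (Q x) A = emeasure (Q (x - z)) ((\<lambda>y. y - z) ` A)"
    and Q_prob: "\<And>z. emeasure (Q z) UNIV = 1"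
    and Q_no_zero_jump: "emeasure (Q 0) {0} = 0"
    and Q_symm: "\<And>A B. A \<in> sets borel \<Longrightarrow> B \<in> sets borel \<Longrightarrow>
        (\<integral>\<^sup>+ x. indicator A x * emeasure (Q x) B \<partial>lborel)
          = (\<integral>\<^sup>+ y. indicator B y * emeasure (Q y) A \<partial>lborel)"
    and m_def: "m = density lborel (\<lambda>_. ennreal (1 / lam0))"
    and F_def: "F = L2 m"
    and E_def: "E = (\<lambda>u v. (1/2) * (\<integral>x. (\<integral>y. (u x - u y) * (v x - v y) \<partial>(Q x)) * lam0 \<partial>m))"
  shows "\<forall>F' E'. regular_dirichlet_subspace m F' E' F E \<longrightarrow>
           F' = F \<and> (\<forall>u\<in>F. \<forall>v\<in>F. E' u v = E u v)"
proof (intro allI impI)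
  fix F' E'
  assume sub: "regular_dirichlet_subspace m F' E' F E"
  then have df: "dirichlet_form m F' E'" and FF: "F' \<subseteq> F" and EE: "\<forall>u\<in>F'. \<forall>v\<in>F'. E' u v = E u v"
    by (auto simp: regular_dirichlet_subspace_def regular_dirichlet_form_def)
  note D = df[unfolded dirichlet_form_def]
  have F'L2: "F' \<subseteq> L2 m" using D[THEN conjunct1] .
  have sat: "\<And>u g. u \<in> F' \<Longrightarrow> g \<in> L2 m \<Longrightarrow> (AE x in m. u x = g x) \<Longrightarrow> g \<in> F'"
    using D[THEN conjunct2, THEN conjunct1] by blast
  have addF: "\<And>u v. u \<in> F' \<Longrightarrow> v \<in> F' \<Longrightarrow> (\<lambda>x. u x + v x) \<in> F'"
    using D[THEN conjunct2, THEN conjunct2, THEN conjunct2, THEN conjunct2, THEN conjunct1] by blast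
  have mulF: "\<And>u c. u \<in> F' \<Longrightarrow> (\<lambda>x. c * u x) \<in> F'"
    using D[THEN conjunct2, THEN conjunct2, THEN conjunct2, THEN conjunct2, THEN conjunct2, THEN conjunct1] by blast
  have diffF: "(\<lambda>x. u x - v x) \<in> F'" if "u \<in> F'" "v \<in> F'" for u v
  proof -
    have "(\<lambda>x. u x + (-1) * v x) \<in> F'" using addF[OF that(1) mulF[OF that(2)]] .
    then show ?thesis by simp
  qed
  have E'pos: "\<And>u. u \<in> F' \<Longrightarrow> 0 \<le> E' u u"
    using D[THEN conjunct2, THEN conjunct2, THEN conjunct2, THEN conjunct2, THEN conjunct2, THEN conjunct2, THEN conjunct2, THEN conjunct2, THEN conjunct2, THEN conjunct1] by blast
  have dense: "\<And>f e. f \<in> L2 m \<Longrightarrow> e > 0 \<Longrightarrow> \<exists>u\<in>F'. (\<integral>x. (f x - u x)\<^sup>2 \<partial>m) < e"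
    using D[THEN conjunct2, THEN conjunct2, THEN conjunct2, THEN conjunct2, THEN conjunct2, THEN conjunct2, THEN conjunct2, THEN conjunct2, THEN conjunct2, THEN conjunct2, THEN conjunct1] by blast
  have complete: "\<And>u. (\<forall>n. u n \<in> F') \<Longrightarrow>
        (\<forall>e>0. \<exists>N. \<forall>n\<ge>N. \<forall>k\<ge>N.
            E1 m E' (\<lambda>x. u n x - u k x) (\<lambda>x. u n x - u k x) < e) \<Longrightarrow>
        (\<exists>w\<in>F'. (\<lambda>n. E1 m E' (\<lambda>x. u n x - w x) (\<lambda>x. u n x - w x)) \<longlonglongrightarrow> 0)"
    using D[THEN conjunct2, THEN conjunct2, THEN conjunct2, THEN conjunct2, THEN conjunct2, THEN conjunct2, THEN conjunct2, THEN conjunct2, THEN conjunct2, THEN conjunct2, THEN conjunct2, THEN conjunct1] by blast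
  have sm: "sets m = sets borel" unfolding m_def by simp
  have bind': "\<And>g. g \<in> borel_measurable borel \<Longrightarrow>
       (\<integral>\<^sup>+ x. \<integral>\<^sup>+ y. g y \<partial>Q x \<partial>lborel) = (\<integral>\<^sup>+ y. g y \<partial>lborel)"
    using bind_id[OF Q_kernel Q_symm Q_prob] by blast
  have Eb: "E d d \<le> 2 * lam0 * (\<integral>x. (d x)\<^sup>2 \<partial>m)" if "d \<in> L2 m" for d
  proof -
    have dm: "d \<in> borel_measurable borel" using that
      by (simp add: L2_def measurable_cong_sets[OF sm refl])
    have di: "integrable m (\<lambda>x. (d x)\<^sup>2)" using that by (simp add: L2_def)
    show ?thesis unfolding E_def
      by (rule E_bound[where w=d, OF Q_kernel bind' Q_prob lam_pos m_def dm di])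
  qed
  have E1b: "E1 m E' d d \<le> (2 * lam0 + 1) * (\<integral>x. (d x)\<^sup>2 \<partial>m)" if "d \<in> F'" for d
  proof -
    have "E1 m E' d d = E d d + (\<integral>x. (d x)\<^sup>2 \<partial>m)"
      using EE that by (simp add: E1_def power2_eq_square)
    also have "\<dots> \<le> (2 * lam0 + 1) * (\<integral>x. (d x)\<^sup>2 \<partial>m)"
      using Eb[of d] that F'L2 by (auto simp: algebra_simps)
    finally show ?thesis .
  qed
  have L2F': "f \<in> F'" if f: "f \<in> L2 m" for f
  proof -
    have "\<forall>n. \<exists>v. v \<in> F' \<and> (\<integral>x. (f x - v x)\<^sup>2 \<partial>m) < inverse (real (Suc n))"
    proof
      fix n
      have "inverse (real (Suc n)) > 0" by simp
      then obtain v where "v \<in> F'" "(\<integral>x. (f x - v x)\<^sup>2 \<partial>m) < inverse (real (Suc n))"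
        using dense[OF f] by blast
      then show "\<exists>v. v \<in> F' \<and> (\<integral>x. (f x - v x)\<^sup>2 \<partial>m) < inverse (real (Suc n))" by blast
    qed
    from choice[OF this] obtain u where u0: "\<forall>n. u n \<in> F' \<and> (\<integral>x. (f x - u n x)\<^sup>2 \<partial>m) < inverse (real (Suc n))"
      by blast
    have u: "\<And>n. u n \<in> F'" using u0 by blast
    have uf: "\<And>n. (\<integral>x. (f x - u n x)\<^sup>2 \<partial>m) < inverse (real (Suc n))" using u0 by blast
    have uL: "u n \<in> L2 m" for n using u F'L2 by auto
    have cauchy: "\<forall>e>0. \<exists>N. \<forall>n\<ge>N. \<forall>k\<ge>N.
            E1 m E' (\<lambda>x. u n x - u k x) (\<lambda>x. u n x - u k x) < e"
    proof (intro allI impI)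
      fix e :: real assume e: "e > 0"
      obtain N0 :: nat where N0: "(2 * lam0 + 1) * 4 / e < real N0"
        using reals_Archimedean2 by blast
      define N where "N = Suc N0"
      have N: "(2 * lam0 + 1) * 4 < e * real (Suc N)"
      proof -
        have "(2 * lam0 + 1) * 4 < e * real N0"
          using N0 e by (simp add: pos_divide_less_eq mult.commute)
        also have "\<dots> \<le> e * real (Suc N)"
          using e unfolding N_def by (intro mult_left_mono) auto
        finally show ?thesis .
      qed
      have CN: "(2 * lam0 + 1) * (4 * inverse (real (Suc N))) < e"
        using N e by (simp add: field_simps)
      show "\<exists>N. \<forall>n\<ge>N. \<forall>k\<ge>N. E1 m E' (\<lambda>x. u n x - u k x) (\<lambda>x. u n x - u k x) < e"
      proof (intro exI allI impI)
        fix n k assume n: "N \<le> n" and k: "N \<le> k"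
        have i1: "inverse (real (Suc n)) \<le> inverse (real (Suc N))"
          using n by (intro le_imp_inverse_le) auto
        have i2: "inverse (real (Suc k)) \<le> inverse (real (Suc N))"
          using k by (intro le_imp_inverse_le) auto
        have "(\<integral>x. (u n x - u k x)\<^sup>2 \<partial>m) \<le> 2 * (\<integral>x. (u n x - f x)\<^sup>2 \<partial>m) + 2 * (\<integral>x. (f x - u k x)\<^sup>2 \<partial>m)"
          using sq_tri[OF uL uL f] .
        also have "\<dots> = 2 * (\<integral>x. (f x - u n x)\<^sup>2 \<partial>m) + 2 * (\<integral>x. (f x - u k x)\<^sup>2 \<partial>m)"
          by (simp add: L2_sym[where a="u n" and b=f])
        also have "\<dots> \<le> 4 * inverse (real (Suc N))"
          using uf[of n] uf[of k] i1 i2 by linarith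
        finally have D: "(\<integral>x. (u n x - u k x)\<^sup>2 \<partial>m) \<le> 4 * inverse (real (Suc N))" .
        have "E1 m E' (\<lambda>x. u n x - u k x) (\<lambda>x. u n x - u k x) \<le> (2 * lam0 + 1) * (\<integral>x. (u n x - u k x)\<^sup>2 \<partial>m)"
          using E1b[OF diffF[OF u u]] .
        also have "\<dots> \<le> (2 * lam0 + 1) * (4 * inverse (real (Suc N)))"
          using D lam_pos by (intro mult_left_mono) auto
        finally show "E1 m E' (\<lambda>x. u n x - u k x) (\<lambda>x. u n x - u k x) < e" using CN by linarith
      qed
    qed
    obtain w where w: "w \<in> F'" and lim: "(\<lambda>n. E1 m E' (\<lambda>x. u n x - w x) (\<lambda>x. u n x - w x)) \<longlonglongrightarrow> 0"
      using complete[OF _ cauchy] u by blast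
    have wL: "w \<in> L2 m" using w F'L2 by auto
    have bnd: "(\<integral>x. (f x - w x)\<^sup>2 \<partial>m) \<le> 2 * inverse (real (Suc n)) + 2 * E1 m E' (\<lambda>x. u n x - w x) (\<lambda>x. u n x - w x)" for n
    proof -
      have dF: "(\<lambda>x. u n x - w x) \<in> F'" using diffF[OF u w] .
      have "E1 m E' (\<lambda>x. u n x - w x) (\<lambda>x. u n x - w x) = E' (\<lambda>x. u n x - w x) (\<lambda>x. u n x - w x) + (\<integral>x. (u n x - w x)\<^sup>2 \<partial>m)"
        by (simp add: E1_def power2_eq_square)
      then have e1: "(\<integral>x. (u n x - w x)\<^sup>2 \<partial>m) \<le> E1 m E' (\<lambda>x. u n x - w x) (\<lambda>x. u n x - w x)"
        using E'pos[OF dF] by linarith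
      have "(\<integral>x. (f x - w x)\<^sup>2 \<partial>m) \<le> 2 * (\<integral>x. (f x - u n x)\<^sup>2 \<partial>m) + 2 * (\<integral>x. (u n x - w x)\<^sup>2 \<partial>m)"
        using sq_tri[OF f wL uL] .
      then show ?thesis using uf[of n] e1 by linarith
    qed
    have lim2: "(\<lambda>n. 2 * inverse (real (Suc n)) + 2 * E1 m E' (\<lambda>x. u n x - w x) (\<lambda>x. u n x - w x)) \<longlonglongrightarrow> 2 * 0 + 2 * 0"
      by (intro tendsto_intros LIMSEQ_inverse_real_of_nat lim)
    have le0: "(\<integral>x. (f x - w x)\<^sup>2 \<partial>m) \<le> 0"
    proof -
      have "(\<integral>x. (f x - w x)\<^sup>2 \<partial>m) \<le> 2 * 0 + 2 * 0"
        by (rule LIMSEQ_le_const[OF lim2]) (use bnd in blast)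
      then show ?thesis by simp
    qed
    have intg: "integrable m (\<lambda>x. (f x - w x)\<^sup>2)" using L2_diff[OF f wL] by (simp add: L2_def)
    have "(\<integral>x. (f x - w x)\<^sup>2 \<partial>m) = 0"
    proof -
      have "0 \<le> (\<integral>x. (f x - w x)\<^sup>2 \<partial>m)" by (intro integral_nonneg_AE) auto
      then show ?thesis using le0 by linarith
    qed
    moreover have "AE x in m. 0 \<le> (f x - w x)\<^sup>2" by simp
    ultimately have "AE x in m. (f x - w x)\<^sup>2 = 0"
      using integral_nonneg_eq_0_iff_AE[OF intg] by blast
    then have "AE x in m. w x = f x" by eventually_elim simp
    then show "f \<in> F'" by (rule sat[OF w f])
  qed
  have FF': "F' = F"
  proof
    show "F' \<subseteq> F" by (rule FF)
    show "F \<subseteq> F'" unfolding F_def using L2F' by blast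
  qed
  have "\<forall>u\<in>F. \<forall>v\<in>F. E' u v = E u v" using EE unfolding FF' .
  with FF' show "F' = F \<and> (\<forall>u\<in>F. \<forall>v\<in>F. E' u v = E u v)" by blast
qed

end
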